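(* Let $n\ge 1$ and let $f$ be the $n$-ary operation on $\mathbb{Z}_8$ given by $f(\mathbf{x})=x_1x_2\cdots x_n\sum_{\alpha\in I_n}b_\alpha\mathbf{x}^\alpha$, where every $b_\alpha\in\mathbb{Z}_8$ is even. Then $f$ preserves the relation $Z$.
   Context: $I_n$ is the set of all $n$-tuples $\alpha\in\{0,1,2\}^n$ with at most two nonzero components, and $\mathbf{x}^\alpha=x_1^{\alpha_1}\cdots x_n^{\alpha_n}$. $P_4$ is the power set of $\{1,2,3,4\}$. For $A\in P_4$, $\mathbf{g}^A\in\mathbb{Z}_8^{P_4}$ is the tuple with $B$-component $1$ if $A\subseteq B$ and $0$ otherwise. Every $\mathbf{u}\in\mathbb{Z}_8^{P_4}$ has a unique expression $\mathbf{u}=\sum_{A\in P_4}a_A\mathbf{g}^A$ with $a_A\in\mathbb{Z}_8$. $Z\subseteq \mathbb{Z}_8^{P_4}$ (a $16$-ary relation) consists of all $\mathbf{u}$ whose coefficients satisfy: (Z1) $a_{\{2\}}\equiv 2a_{\{1\}}\pmod 4$ and $a_{\{4\}}\equiv 2a_{\{3\}}\pmod 4$; (Z2) $a_A\equiv 0\pmod 2$ whenever $|A|\ge 2$; (Z3) $a_A\equiv 0\pmod 4$ whenever $|A|\ge 2$ and $A\cap\{2,4\}\neq\emptyset$; (Z4) $a_A=0$ whenever $\{2,4\}\subseteq A$. An $n$-ary operation $f$ preserves $Z$ if applying $f$ componentwise to any $\mathbf{u}^{(1)},\dots,\mathbf{u}^{(n)}\in Z$ yields an element of $Z$. *)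

theory Defs
  imports "HOL-Library.Numeral_Type"
begin

text \<open>Z_8 is the type 8 (integers modulo 8) from Numeral_Type.
  P_4 is Pow {1,2,3,4}; a tuple in Z_8^{P_4} is a function nat set => 8
  (only its values on P_4 matter).\<close>

definition P4 :: "nat set set" where
  "P4 = Pow {1,2,3,4}"

definition gvec :: "nat set \<Rightarrow> nat set \<Rightarrow> 8" where
  "gvec A B = (if A \<subseteq> B then 1 else 0)"

definition evenZ8 :: "8 \<Rightarrow> bool" where
  "evenZ8 x \<longleftrightarrow> (\<exists>c. x = 2 * c)"

definition div4Z8 :: "8 \<Rightarrow> bool" where
  "div4Z8 x \<longleftrightarrow> (\<exists>c. x = 4 * c)"

definition coeff_ok :: "(nat set \<Rightarrow> 8) \<Rightarrow> bool" where
  "coeff_ok a \<longleftrightarrow>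
     div4Z8 (a {2} - 2 * a {1}) \<and> div4Z8 (a {4} - 2 * a {3}) \<and>
     (\<forall>A\<in>P4. card A \<ge> 2 \<longrightarrow> evenZ8 (a A)) \<and>
     (\<forall>A\<in>P4. card A \<ge> 2 \<and> A \<inter> {2,4} \<noteq> {} \<longrightarrow> div4Z8 (a A)) \<and>
     (\<forall>A\<in>P4. {2,4} \<subseteq> A \<longrightarrow> a A = 0)"

definition relZ :: "(nat set \<Rightarrow> 8) set" where
  "relZ = {u. \<exists>a. (\<forall>B\<in>P4. u B = (\<Sum>A\<in>P4. a A * gvec A B)) \<and> coeff_ok a}"

definition In :: "nat \<Rightarrow> (nat \<Rightarrow> nat) set" where
  "In n = {\<alpha>. (\<forall>i. \<alpha> i \<le> 2) \<and> (\<forall>i. i \<notin> {1..n} \<longrightarrow> \<alpha> i = 0)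
             \<and> card {i\<in>{1..n}. \<alpha> i \<noteq> 0} \<le> 2}"

definition monom :: "nat \<Rightarrow> (nat \<Rightarrow> nat) \<Rightarrow> (nat \<Rightarrow> 8) \<Rightarrow> 8" where
  "monom n \<alpha> x = (\<Prod>i\<in>{1..n}. x i ^ \<alpha> i)"

definition fop :: "nat \<Rightarrow> ((nat \<Rightarrow> nat) \<Rightarrow> 8) \<Rightarrow> (nat \<Rightarrow> 8) \<Rightarrow> 8" where
  "fop n b x = (\<Prod>i\<in>{1..n}. x i) * (\<Sum>\<alpha>\<in>In n. b \<alpha> * monom n \<alpha> x)"

definition preserves_Z :: "nat \<Rightarrow> ((nat \<Rightarrow> 8) \<Rightarrow> 8) \<Rightarrow> bool" where
  "preserves_Z n f \<longleftrightarrow>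
     (\<forall>U :: nat \<Rightarrow> nat set \<Rightarrow> 8. (\<forall>i\<in>{1..n}. U i \<in> relZ) \<longrightarrow>
        (\<lambda>B. f (\<lambda>i. U i B)) \<in> relZ)"

end

theory Submission
  imports Defs
begin
lemma eight0[simp]: "(8::8) = 0" by simp

lemma exh8: "(x::8) = 0 \<or> x = 1 \<or> x = 2 \<or> x = 3 \<or> x = 4 \<or> x = 5 \<or> x = 6 \<or> x = 7"
proof (induct x)
  case (of_int z)
  then have "z = 0 \<or> z = 1 \<or> z = 2 \<or> z = 3 \<or> z = 4 \<or> z = 5 \<or> z = 6 \<or> z = 7" by auto
  then show ?case by auto
qed

lemma even_iff: "evenZ8 x \<longleftrightarrow> 4 * x = 0"
proof
  assume "evenZ8 x" then obtain c where "x = 2 * c" unfolding evenZ8_def by blast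
  then show "4 * x = 0" by (simp add: mult.assoc[symmetric] eight0)
next
  assume h: "4 * x = 0"
  show "evenZ8 x" unfolding evenZ8_def
    using exh8[of x] h
    apply (elim disjE)
    apply (rule exI[of _ 0]; simp)
    apply simp
    apply (rule exI[of _ 1]; simp)
    apply simp
    apply (rule exI[of _ 2]; simp)
    apply simp
    apply (rule exI[of _ 3]; simp)
    apply simp
    done
qed

lemma div4_iff: "div4Z8 x \<longleftrightarrow> 2 * x = 0"
proof
  assume "div4Z8 x" then obtain c where "x = 4 * c" unfolding div4Z8_def by blast
  then show "2 * x = 0" by (simp add: mult.assoc[symmetric] eight0)
next
  assume h: "2 * x = 0"
  show "div4Z8 x" unfolding div4Z8_def
    using exh8[of x] h
    apply (elim disjE)
    apply (rule exI[of _ 0]; simp)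
    apply simp
    apply simp
    apply simp
    apply (rule exI[of _ 1]; simp)
    apply simp
    apply simp
    apply simp
    done
qed

lemma even_sum: "(\<And>x. x \<in> S \<Longrightarrow> evenZ8 (f x)) \<Longrightarrow> evenZ8 (sum f S)"
  by (simp add: even_iff sum_distrib_left)
lemma div4_sum: "(\<And>x. x \<in> S \<Longrightarrow> div4Z8 (f x)) \<Longrightarrow> div4Z8 (sum f S)"
  by (simp add: div4_iff sum_distrib_left)
lemma even_multL: "evenZ8 x \<Longrightarrow> evenZ8 (x * y)"
  by (simp add: even_iff mult.assoc[symmetric])
lemma even_multR: "evenZ8 y \<Longrightarrow> evenZ8 (x * y)"
  by (simp add: even_iff mult.left_commute[of 4])
lemma div4_multL: "div4Z8 x \<Longrightarrow> div4Z8 (x * y)"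
  by (simp add: div4_iff mult.assoc[symmetric])
lemma div4_multR: "div4Z8 y \<Longrightarrow> div4Z8 (x * y)"
  by (simp add: div4_iff mult.left_commute[of 2])
lemma div4_even2: "evenZ8 x \<Longrightarrow> evenZ8 y \<Longrightarrow> div4Z8 (x * y)"
proof -
  assume "evenZ8 x" "evenZ8 y"
  then obtain p q where "x = 2 * p" "y = 2 * q" unfolding evenZ8_def by blast
  then have "x * y = 4 * (p * q)" by (simp add: algebra_simps)
  then show ?thesis unfolding div4Z8_def by blast
qed
lemma div4_even: "div4Z8 x \<Longrightarrow> evenZ8 x"
  by (simp add: div4_iff even_iff) (metis mult.assoc mult_zero_right numeral_Bit0_eq_double mult_2)

definition vec :: "(nat set \<Rightarrow> 8) \<Rightarrow> nat set \<Rightarrow> 8" where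
  "vec d B = (\<Sum>A\<in>P4. d A * gvec A B)"

definition S1 :: "(nat set \<Rightarrow> 8) \<Rightarrow> bool" where
  "S1 d \<longleftrightarrow> (\<forall>A\<in>P4. A \<inter> {2,4} \<noteq> {} \<longrightarrow> evenZ8 (d A)) \<and> (\<forall>A\<in>P4. {2,4} \<subseteq> A \<longrightarrow> div4Z8 (d A))"

definition V1 :: "(nat set \<Rightarrow> 8) set" where
  "V1 = {u. \<exists>d. (\<forall>B\<in>P4. u B = vec d B) \<and> S1 d}"

definition conv :: "(nat set \<Rightarrow> 8) \<Rightarrow> (nat set \<Rightarrow> 8) \<Rightarrow> nat set \<Rightarrow> 8" where
  "conv d e C = (\<Sum>A\<in>P4. \<Sum>A'\<in>P4. if A \<union> A' = C then d A * e A' else 0)"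

lemma finP4[simp]: "finite P4" by (simp add: P4_def)

lemma Un_P4: "A \<in> P4 \<Longrightarrow> A' \<in> P4 \<Longrightarrow> A \<union> A' \<in> P4"
  by (simp add: P4_def)

lemma gvec_Un: "gvec (A \<union> A') B = gvec A B * gvec A' B"
  by (simp add: gvec_def)

lemma vec_conv: "vec (conv d e) B = vec d B * vec e B"
proof -
  have "vec (conv d e) B = (\<Sum>C\<in>P4. \<Sum>A\<in>P4. \<Sum>A'\<in>P4. if A \<union> A' = C then d A * e A' * gvec C B else 0)"
    unfolding vec_def conv_def sum_distrib_right by (intro sum.cong refl) simp
  also have "\<dots> = (\<Sum>A\<in>P4. \<Sum>C\<in>P4. \<Sum>A'\<in>P4. if A \<union> A' = C then d A * e A' * gvec C B else 0)"
    by (rule sum.swap)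
  also have "\<dots> = (\<Sum>A\<in>P4. \<Sum>A'\<in>P4. \<Sum>C\<in>P4. if A \<union> A' = C then d A * e A' * gvec C B else 0)"
    by (rule sum.cong[OF refl], rule sum.swap)
  also have "\<dots> = (\<Sum>A\<in>P4. \<Sum>A'\<in>P4. d A * e A' * gvec (A \<union> A') B)"
    by (intro sum.cong refl) (simp add: sum.delta' Un_P4)
  also have "\<dots> = (\<Sum>A\<in>P4. \<Sum>A'\<in>P4. (d A * gvec A B) * (e A' * gvec A' B))"
    by (intro sum.cong refl) (simp add: gvec_Un algebra_simps)
  also have "\<dots> = vec d B * vec e B"
    unfolding vec_def by (simp add: sum_product)
  finally show ?thesis .
qed

lemma even0[simp]: "evenZ8 0" by (simp add: even_iff)
lemma div40[simp]: "div4Z8 0" by (simp add: div4_iff)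

lemma S1_conv: assumes "S1 d" "S1 e" shows "S1 (conv d e)"
proof -
  have d1: "\<forall>A\<in>P4. A \<inter> {2,4} \<noteq> {} \<longrightarrow> evenZ8 (d A)" and d2: "\<forall>A\<in>P4. {2,4} \<subseteq> A \<longrightarrow> div4Z8 (d A)"
    using assms(1) unfolding S1_def by (rule conjunct1, rule conjunct2)
  have e1: "\<forall>A\<in>P4. A \<inter> {2,4} \<noteq> {} \<longrightarrow> evenZ8 (e A)" and e2: "\<forall>A\<in>P4. {2,4} \<subseteq> A \<longrightarrow> div4Z8 (e A)"
    using assms(2) unfolding S1_def by (rule conjunct1, rule conjunct2)
  show ?thesis unfolding S1_def
  proof (intro conjI ballI impI)
    fix C assume C: "C \<in> P4" "C \<inter> {2,4} \<noteq> {}"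
    show "evenZ8 (conv d e C)" unfolding conv_def
    proof (intro even_sum)
      fix A A' assume AA: "A \<in> P4" "A' \<in> P4"
      show "evenZ8 (if A \<union> A' = C then d A * e A' else 0)"
      proof (cases "A \<union> A' = C")
        case True
        then have "A \<inter> {2,4} \<noteq> {} \<or> A' \<inter> {2,4} \<noteq> {}" using C by blast
        then have "evenZ8 (d A * e A')"
        proof
          assume "A \<inter> {2,4} \<noteq> {}" then have "evenZ8 (d A)" using d1 AA by blast
          then show ?thesis by (rule even_multL)
        next
          assume "A' \<inter> {2,4} \<noteq> {}" then have "evenZ8 (e A')" using e1 AA by blast
          then show ?thesis by (rule even_multR)
        qed
        then show ?thesis using True by simp
      qed simp
    qed
  next
    fix C assume C: "C \<in> P4" "{2,4} \<subseteq> C"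
    show "div4Z8 (conv d e C)" unfolding conv_def
    proof (intro div4_sum)
      fix A A' assume AA: "A \<in> P4" "A' \<in> P4"
      show "div4Z8 (if A \<union> A' = C then d A * e A' else 0)"
      proof (cases "A \<union> A' = C")
        case True
        then have "{2,4} \<subseteq> A \<or> {2,4} \<subseteq> A' \<or> (A \<inter> {2,4} \<noteq> {} \<and> A' \<inter> {2,4} \<noteq> {})" using C by blast
        then have "div4Z8 (d A * e A')"
        proof (elim disjE)
          assume "{2,4} \<subseteq> A" then have "div4Z8 (d A)" using d2 AA by blast
          then show ?thesis by (rule div4_multL)
        next
          assume "{2,4} \<subseteq> A'" then have "div4Z8 (e A')" using e2 AA by blast
          then show ?thesis by (rule div4_multR)
        next
          assume h: "A \<inter> {2,4} \<noteq> {} \<and> A' \<inter> {2,4} \<noteq> {}"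
          then have "evenZ8 (d A)" "evenZ8 (e A')" using d1 e1 AA by blast+
          then show ?thesis by (rule div4_even2)
        qed
        then show ?thesis using True by simp
      qed simp
    qed
  qed
qed

lemma V1_mult: assumes "u \<in> V1" "v \<in> V1" shows "(\<lambda>B. u B * v B) \<in> V1"
proof -
  obtain d where d: "\<forall>B\<in>P4. u B = vec d B" "S1 d" using assms(1) unfolding V1_def by blast
  obtain e where e: "\<forall>B\<in>P4. v B = vec e B" "S1 e" using assms(2) unfolding V1_def by blast
  show ?thesis unfolding V1_def using d e S1_conv[OF d(2) e(2)] vec_conv[of d e]
    by (auto intro!: exI[of _ "conv d e"])
qed

lemma V1_const: "(\<lambda>B. c) \<in> V1"
proof -
  let ?d = "\<lambda>A::nat set. if A = {} then c else 0"
  have "vec ?d B = c" for B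
  proof -
    have "vec ?d B = (\<Sum>A\<in>P4. if A = {} then c * gvec A B else 0)"
      unfolding vec_def by (intro sum.cong refl) simp
    also have "\<dots> = c" by (simp add: P4_def gvec_def)
    finally show ?thesis .
  qed
  moreover have "S1 ?d" unfolding S1_def by auto
  ultimately show ?thesis unfolding V1_def mem_Collect_eq by (intro exI[of _ ?d]) auto
qed

lemma V1_prod: "(\<And>i. i \<in> S \<Longrightarrow> F i \<in> V1) \<Longrightarrow> (\<lambda>B. \<Prod>i\<in>S. F i B) \<in> V1"
proof (induction S rule: infinite_finite_induct)
  case (infinite S) then show ?case using V1_const by simp
next
  case empty then show ?case using V1_const by simp
next
  case (insert x F') then show ?case using V1_mult[of "F x" "\<lambda>B. \<Prod>i\<in>F'. F i B"] by simp
qed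

lemma V1_power: "u \<in> V1 \<Longrightarrow> (\<lambda>B. u B ^ k) \<in> V1"
  by (induction k) (simp_all add: V1_const V1_mult)

lemma relZ_V1: "u \<in> relZ \<Longrightarrow> u \<in> V1"
proof -
  assume "u \<in> relZ"
  then obtain a where a: "\<forall>B\<in>P4. u B = vec a B" "coeff_ok a" unfolding relZ_def vec_def by blast
  have c1: "div4Z8 (a {2} - 2 * a {1})" using a(2) unfolding coeff_ok_def by (rule conjunct1)
  have c2: "div4Z8 (a {4} - 2 * a {3})" using a(2) unfolding coeff_ok_def by (rule conjunct1[OF conjunct2])
  have c3: "\<forall>A\<in>P4. card A \<ge> 2 \<and> A \<inter> {2,4} \<noteq> {} \<longrightarrow> div4Z8 (a A)"
    using a(2) unfolding coeff_ok_def by (rule conjunct1[OF conjunct2[OF conjunct2[OF conjunct2]]])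
  have c4: "\<forall>A\<in>P4. {2,4} \<subseteq> A \<longrightarrow> a A = 0"
    using a(2) unfolding coeff_ok_def by (rule conjunct2[OF conjunct2[OF conjunct2[OF conjunct2]]])
  have "S1 a" unfolding S1_def
  proof (intro conjI ballI impI)
    fix A assume A: "A \<in> P4" "A \<inter> {2,4} \<noteq> {}"
    show "evenZ8 (a A)"
    proof (cases "card A \<ge> 2")
      case True
      have "div4Z8 (a A)" using c3 True A by blast
      then show ?thesis by (rule div4_even)
    next
      case False
      have fin: "finite A" using A by (auto simp: P4_def intro: finite_subset)
      obtain x where x: "x \<in> A" "x \<in> {2,4}" using A by blast
      have "card A \<noteq> 0" using fin x by auto
      then have "card A = 1" using False by arith
      then have "A = {x}" using x by (metis card_1_singletonE singletonD)
      then have "A = {2} \<or> A = {4}" using x by auto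
      moreover have "evenZ8 (a {2})"
      proof -
        obtain c where "a {2} - 2 * a {1} = 4 * c" using c1 unfolding div4Z8_def by blast
        then have "a {2} = 2 * (a {1} + 2 * c)" by (simp add: algebra_simps eq_diff_eq)
        then show ?thesis unfolding evenZ8_def by blast
      qed
      moreover have "evenZ8 (a {4})"
      proof -
        obtain c where "a {4} - 2 * a {3} = 4 * c" using c2 unfolding div4Z8_def by blast
        then have "a {4} = 2 * (a {3} + 2 * c)" by (simp add: algebra_simps eq_diff_eq)
        then show ?thesis unfolding evenZ8_def by blast
      qed
      ultimately show ?thesis by auto
    qed
  next
    fix A assume A: "A \<in> P4" "{2,4} \<subseteq> A"
    then have "a A = 0" using c4 by blast
    then show "div4Z8 (a A)" by simp
  qed
  then show "u \<in> V1" unfolding V1_def using a by blast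
qed

lemma V1_double: assumes "u \<in> V1" shows "(\<lambda>B. 2 * u B) \<in> relZ"
proof -
  obtain d where d: "\<forall>B\<in>P4. u B = vec d B" "S1 d" using assms unfolding V1_def by blast
  have P24: "{2} \<in> P4" "{4} \<in> P4" by (simp_all add: P4_def)
  have e2: "evenZ8 (d {2})" "evenZ8 (d {4})" using d(2) P24 unfolding S1_def by auto
  have "coeff_ok (\<lambda>A. 2 * d A)" unfolding coeff_ok_def
  proof (intro conjI ballI impI)
    show "div4Z8 (2 * d {2} - 2 * (2 * d {1}))" using e2 by (simp add: div4_iff even_iff algebra_simps)
    show "div4Z8 (2 * d {4} - 2 * (2 * d {3}))" using e2 by (simp add: div4_iff even_iff algebra_simps)
  next
    fix A assume "A \<in> P4" "2 \<le> card A" then show "evenZ8 (2 * d A)" unfolding evenZ8_def by blast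
  next
    fix A assume "A \<in> P4" "2 \<le> card A \<and> A \<inter> {2, 4} \<noteq> {}"
    then have "evenZ8 (d A)" using d(2) unfolding S1_def by blast
    then show "div4Z8 (2 * d A)" by (simp add: div4_iff even_iff mult.assoc[symmetric])
  next
    fix A assume "A \<in> P4" "{2,4} \<subseteq> A"
    then show "2 * d A = 0" using d(2) unfolding S1_def by (simp add: div4_iff)
  qed
  moreover have "\<forall>B\<in>P4. 2 * u B = (\<Sum>A\<in>P4. 2 * d A * gvec A B)"
    using d(1) unfolding vec_def by (simp add: sum_distrib_left mult.assoc)
  ultimately show ?thesis unfolding relZ_def mem_Collect_eq by (intro exI[of _ "\<lambda>A. 2 * d A"]) auto
qed

lemma relZ_add: assumes "u \<in> relZ" "v \<in> relZ" shows "(\<lambda>B. u B + v B) \<in> relZ"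
proof -
  obtain a where a: "\<forall>B\<in>P4. u B = (\<Sum>A\<in>P4. a A * gvec A B)" "coeff_ok a" using assms(1) unfolding relZ_def by blast
  obtain c where c: "\<forall>B\<in>P4. v B = (\<Sum>A\<in>P4. c A * gvec A B)" "coeff_ok c" using assms(2) unfolding relZ_def by blast
  have "coeff_ok (\<lambda>A. a A + c A)" using a(2) c(2) unfolding coeff_ok_def
    by (simp add: div4_iff even_iff algebra_simps)
  moreover have "\<forall>B\<in>P4. u B + v B = (\<Sum>A\<in>P4. (a A + c A) * gvec A B)"
    using a(1) c(1) by (simp add: algebra_simps sum.distrib)
  ultimately show ?thesis unfolding relZ_def mem_Collect_eq by (intro exI[of _ "\<lambda>A. a A + c A"]) auto
qed

lemma relZ_zero: "(\<lambda>B. 0) \<in> relZ"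
  unfolding relZ_def coeff_ok_def by (auto intro!: exI[of _ "\<lambda>_. 0"])

lemma relZ_sum: "(\<And>i. i \<in> S \<Longrightarrow> (\<lambda>B. F i B) \<in> relZ) \<Longrightarrow> (\<lambda>B. \<Sum>i\<in>S. F i B) \<in> relZ"
proof (induction S rule: infinite_finite_induct)
  case (infinite S) then show ?case using relZ_zero by simp
next
  case empty then show ?case using relZ_zero by simp
next
  case (insert x F') then show ?case using relZ_add[of "\<lambda>B. F x B" "\<lambda>B. \<Sum>i\<in>F'. F i B"] by simp
qed

theorem lemma3p6:
  fixes n :: nat and b :: "(nat \<Rightarrow> nat) \<Rightarrow> 8"
  assumes "n \<ge> 1"
    and "\<forall>\<alpha>\<in>In n. evenZ8 (b \<alpha>)"
  shows "preserves_Z n (fop n b)"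
  unfolding preserves_Z_def
proof (intro allI impI)
  fix U :: "nat \<Rightarrow> nat set \<Rightarrow> 8" assume U: "\<forall>i\<in>{1..n}. U i \<in> relZ"
  have eq: "fop n b (\<lambda>i. U i B) = (\<Sum>\<alpha>\<in>In n. b \<alpha> * ((\<Prod>i\<in>{1..n}. U i B) * monom n \<alpha> (\<lambda>i. U i B)))" for B
    unfolding fop_def by (simp add: sum_distrib_left algebra_simps)
  have "(\<lambda>B. \<Sum>\<alpha>\<in>In n. b \<alpha> * ((\<Prod>i\<in>{1..n}. U i B) * monom n \<alpha> (\<lambda>i. U i B))) \<in> relZ"
  proof (rule relZ_sum)
    fix \<alpha> assume "\<alpha> \<in> In n"
    then obtain c where c: "b \<alpha> = 2 * c" using assms(2) unfolding evenZ8_def by blast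
    have UV: "U i \<in> V1" if "i \<in> {1..n}" for i using U that relZ_V1 by blast
    have "(\<lambda>B. c * ((\<Prod>i\<in>{1..n}. U i B) * monom n \<alpha> (\<lambda>i. U i B))) \<in> V1"
      unfolding monom_def
      by (intro V1_mult V1_const V1_prod V1_power) (auto intro: UV)
    from V1_double[OF this] show "(\<lambda>B. b \<alpha> * ((\<Prod>i\<in>{1..n}. U i B) * monom n \<alpha> (\<lambda>i. U i B))) \<in> relZ"
      by (simp add: c mult.assoc)
  qed
  then show "(\<lambda>B. fop n b (\<lambda>i. U i B)) \<in> relZ" by (simp add: eq)
qed
end
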